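(* Let $C>0$ and $\delta>0$, let $f \in C((0,\infty);(0,\infty))$ be asymptotically increasing with $\lim_{x\to\infty} f(x)/x = \infty$, and let $\psi \in C([-\delta,0];(0,\infty))$. Suppose $f$ preserves superexponential growth, and let $z \in C([-\delta,\infty);(0,\infty))$ be a solution of \[ z'(t) = C\int_{t-\delta}^t f(z(s))\,ds, \quad t\ge 0; \qquad z(t)=\psi(t), \quad t\in[-\delta,0]. \] Then \[ \lim_{t\to\infty} \frac{F_U(z(t))}{t} = \sqrt{2C}, \] where $F_U(x) = \int_1^x \frac{du}{\sqrt{\int_0^u f(s)\,ds}}$ for $x>0$.
   Context: "$f$ is asymptotically increasing" means that there is a continuous increasing function $\phi:(0,\infty)\to(0,\infty)$ with $f(x)/\phi(x)\to 1$ as $x\to\infty$. A function $g \in C((0,\infty);(0,\infty))$ exhibits superexponential growth if $g(x)\to\infty$ as $x\to\infty$ and $\lim_{x\to\infty} g(x-\epsilon)/g(x) = 0$ for each $\epsilon>0$. A function $\phi \in C((0,\infty);(0,\infty))$ preserves superexponential growth if for every $g$ exhibiting superexponential growth and every $\epsilon>0$, $\lim_{x\to\infty}\phi(g(x-\epsilon))/\phi(g(x)) = 0$. *)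

theory Defs
  imports "HOL-Analysis.Analysis"
begin

definition asymp_increasing :: "(real \<Rightarrow> real) \<Rightarrow> bool" where
  "asymp_increasing f \<longleftrightarrow>
     (\<exists>\<phi>. continuous_on {0<..} \<phi> \<and> (\<forall>x>0. \<phi> x > 0) \<and>
          strict_mono_on {0<..} \<phi> \<and>
          ((\<lambda>x. f x / \<phi> x) \<longlongrightarrow> 1) at_top)"

definition superexp_growth :: "(real \<Rightarrow> real) \<Rightarrow> bool" where
  "superexp_growth g \<longleftrightarrow>
     continuous_on {0<..} g \<and> (\<forall>x>0. g x > 0) \<and>
     filterlim g at_top at_top \<and>
     (\<forall>\<epsilon>>0. ((\<lambda>x. g (x - \<epsilon>) / g x) \<longlongrightarrow> 0) at_top)"

definition preserves_superexp :: "(real \<Rightarrow> real) \<Rightarrow> bool" where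
  "preserves_superexp \<phi> \<longleftrightarrow>
     (\<forall>g \<epsilon>. superexp_growth g \<and> \<epsilon> > 0 \<longrightarrow>
        ((\<lambda>x. \<phi> (g (x - \<epsilon>)) / \<phi> (g x)) \<longlongrightarrow> 0) at_top)"

definition F_U :: "(real \<Rightarrow> real) \<Rightarrow> real \<Rightarrow> real" where
  "F_U f x = (let h = (\<lambda>u. 1 / sqrt (integral {0..u} f)) in
     if 1 \<le> x then integral {1..x} h else - integral {x..1} h)"

end

theory Submission
  imports Defs
begin

lemma int_deriv:
  fixes g :: "real \<Rightarrow> real"
  assumes "\<And>b. continuous_on {a..b} g" "x > a"
  shows "((\<lambda>y. integral {a..y} g) has_real_derivative g x) (at x)"
proof -
  have "((\<lambda>y. integral {a..y} g) has_real_derivative g x) (at x within {a..x+1})"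
    by (rule integral_has_real_derivative) (use assms in auto)
  moreover have "at x within {a..x+1} = at x" using assms(2) by (intro at_within_Icc_at) auto
  ultimately show ?thesis by simp
qed

lemma int_lb:
  fixes g :: "real \<Rightarrow> real"
  assumes "g integrable_on {a..b}" "a \<le> b" "\<And>s. s\<in>{a..b} \<Longrightarrow> c \<le> g s"
  shows "c*(b-a) \<le> integral {a..b} g"
proof -
  have "integral {a..b} (\<lambda>_. c) \<le> integral {a..b} g" by (rule integral_le) (use assms in auto)
  thus ?thesis using assms(2) by (simp add: mult.commute)
qed

lemma f_lb:
  fixes f :: "real \<Rightarrow> real"
  assumes "continuous_on {0<..} f" "\<forall>x>0. f x > 0" "\<forall>x\<ge>X. x \<le> f x" "a > 0"
  shows "\<exists>m>0. \<forall>x\<ge>a. m \<le> f x"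
proof (cases "a \<le> X")
  case True
  have "continuous_on {a..X} f" by (rule continuous_on_subset[OF assms(1)]) (use assms(4) in auto)
  then obtain x0 where x0: "x0 \<in> {a..X}" "\<forall>y\<in>{a..X}. f x0 \<le> f y"
    using continuous_attains_inf[of "{a..X}" f] True by auto
  have "f x0 > 0" using x0 assms(2,4) by auto
  show ?thesis
  proof (intro exI[of _ "min (f x0) a"] conjI allI impI)
    show "min (f x0) a > 0" using \<open>f x0 > 0\<close> assms(4) by simp
    fix x assume "a \<le> x"
    show "min (f x0) a \<le> f x"
    proof (cases "x \<le> X")
      case True thus ?thesis using x0 \<open>a \<le> x\<close> by force
    next
      case False
      hence "x \<le> f x" using assms(3) by auto
      thus ?thesis using \<open>a \<le> x\<close> by linarith
    qed
  qed
next
  case False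
  show ?thesis
  proof (intro exI[of _ a] conjI allI impI)
    fix x assume "a \<le> x"
    hence "x \<le> f x" using assms(3) False by auto
    thus "a \<le> f x" using \<open>a \<le> x\<close> by linarith
  qed (use assms(4) in auto)
qed


theorem lemma6p5:
  fixes C \<delta> :: real and f \<psi> z :: "real \<Rightarrow> real"
  assumes C_pos: "C > 0" and delta_pos: "\<delta> > 0"
    and f_cont: "continuous_on {0<..} f" and f_pos: "\<forall>x>0. f x > 0"
    and f_int: "f integrable_on {0..1}"
    and f_asym: "asymp_increasing f"
    and f_superlin: "filterlim (\<lambda>x. f x / x) at_top at_top"
    and psi_cont: "continuous_on {-\<delta>..0} \<psi>" and psi_pos: "\<forall>t\<in>{-\<delta>..0}. \<psi> t > 0"
    and f_pres: "preserves_superexp f"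
    and z_cont: "continuous_on {-\<delta>..} z" and z_pos: "\<forall>t\<ge>-\<delta>. z t > 0"
    and z_init: "\<forall>t\<in>{-\<delta>..0}. z t = \<psi> t"
    and z_ode: "\<forall>t\<ge>0. (z has_real_derivative
                   C * integral {t-\<delta>..t} (\<lambda>s. f (z s))) (at t within {0..})"
  shows "((\<lambda>t. F_U f (z t) / t) \<longlongrightarrow> sqrt (2 * C)) at_top"
proof -
  define g where "g = (\<lambda>s. f (z s))"
  have g_cont: "continuous_on {-\<delta>..} g"
    unfolding g_def by (rule continuous_on_compose2[OF f_cont z_cont]) (use z_pos in auto)
  have g_pos: "\<And>s. s \<ge> -\<delta> \<Longrightarrow> g s > 0" using f_pos z_pos by (simp add: g_def)
  have g_int: "\<And>a b. -\<delta> \<le> a \<Longrightarrow> g integrable_on {a..b}"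
    by (rule integrable_continuous_interval, rule continuous_on_subset[OF g_cont]) auto
  define zd where "zd = (\<lambda>t. C * integral {t-\<delta>..t} g)"
  have zder: "\<And>t. t > 0 \<Longrightarrow> (z has_real_derivative zd t) (at t)"
  proof -
    fix t :: real assume "t > 0"
    have "(z has_real_derivative zd t) (at t within {0..})" using z_ode \<open>t>0\<close> by (simp add: zd_def g_def)
    moreover have "at t within {0..} = at t" using \<open>t>0\<close> by (intro at_within_interior) simp
    ultimately show "(z has_real_derivative zd t) (at t)" by simp
  qed
  have zd_lb: "\<And>u a c. 0 \<le> u \<Longrightarrow> 0 < a \<Longrightarrow> a \<le> \<delta> \<Longrightarrow> (\<And>s. s\<in>{u-a..u} \<Longrightarrow> c \<le> g s) \<Longrightarrow> C*(c*a) \<le> zd u"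
  proof -
    fix u a c :: real assume u: "0 \<le> u" "0 < a" "a \<le> \<delta>" and c: "\<And>s. s\<in>{u-a..u} \<Longrightarrow> c \<le> g s"
    have "c*(u-(u-a)) \<le> integral {u-a..u} g" using u delta_pos by (intro int_lb g_int c) auto
    also have "\<dots> \<le> integral {u-\<delta>..u} g"
      by (rule integral_subset_le) (use u g_int g_pos in \<open>auto intro: less_imp_le\<close>)
    finally show "C*(c*a) \<le> zd u" unfolding zd_def using C_pos by simp
  qed
  have zd_nn: "\<And>u. 0 \<le> u \<Longrightarrow> 0 \<le> zd u"
  proof -
    fix u :: real assume "0 \<le> u"
    have "0 \<le> integral {u-\<delta>..u} g"
      by (rule integral_nonneg) (use \<open>0 \<le> u\<close> g_int g_pos in \<open>auto intro: less_imp_le\<close>)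
    thus "0 \<le> zd u" unfolding zd_def using C_pos by simp
  qed
  have z_mono: "\<And>s t. 0 \<le> s \<Longrightarrow> s \<le> t \<Longrightarrow> z s \<le> z t"
  proof -
    fix s t :: real assume st: "0 \<le> s" "s \<le> t"
    show "z s \<le> z t"
    proof (rule DERIV_nonneg_imp_increasing_open[OF st(2)])
      fix x assume "s < x" "x < t"
      thus "\<exists>y. DERIV z x :> y \<and> y \<ge> 0" using zder zd_nn st by (intro exI[of _ "zd x"]) auto
    next
      show "continuous_on {s..t} z" by (rule continuous_on_subset[OF z_cont]) (use st delta_pos in auto)
    qed
  qed
  have superM: "\<And>M. \<exists>X>0. \<forall>x\<ge>X. M*x \<le> f x"
  proof -
    fix M :: real
    have "\<forall>Z. eventually (\<lambda>x. Z \<le> f x / x) at_top" using f_superlin unfolding filterlim_at_top by blast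
    hence "eventually (\<lambda>x. M \<le> f x / x) at_top" by blast
    then obtain N where N: "\<forall>x\<ge>N. M \<le> f x / x" by (auto simp: eventually_at_top_linorder)
    show "\<exists>X>0. \<forall>x\<ge>X. M*x \<le> f x"
    proof (intro exI[of _ "max N 1"] conjI allI impI)
      fix x assume "max N 1 \<le> x"
      thus "M*x \<le> f x" using N by (auto simp: le_divide_eq)
    qed simp
  qed
  obtain X where X: "\<forall>x\<ge>X. x \<le> f x" using superM[of 1] by auto
  have z0: "z 0 > 0" using z_pos delta_pos by auto
  obtain m0 where m0: "m0 > 0" "\<forall>x\<ge>z 0. m0 \<le> f x" using f_lb[OF f_cont f_pos X z0] by auto
  have zd_lin: "\<And>u. \<delta> \<le> u \<Longrightarrow> C*(m0*\<delta>) \<le> zd u"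
  proof -
    fix u assume u: "\<delta> \<le> u"
    show "C*(m0*\<delta>) \<le> zd u"
    proof (rule zd_lb)
      fix s assume "s \<in> {u-\<delta>..u}"
      hence "z 0 \<le> z s" using u by (intro z_mono) auto
      thus "m0 \<le> g s" using m0 by (simp add: g_def)
    qed (use u delta_pos in auto)
  qed
  have zd_pos: "\<And>u. \<delta> \<le> u \<Longrightarrow> 0 < zd u"
    using zd_lin C_pos m0 delta_pos by (meson mult_pos_pos order_less_le_trans)
  define K where "K = C*(m0*\<delta>)"
  have K_pos: "K > 0" unfolding K_def using C_pos m0 delta_pos by simp
  have z_lin: "\<And>t. \<delta> < t \<Longrightarrow> z \<delta> + K*(t-\<delta>) \<le> z t"
  proof -
    fix t assume t: "\<delta> < t"
    obtain \<xi> where \<xi>: "\<delta> < \<xi>" "\<xi> < t" "z t - z \<delta> = (t-\<delta>) * zd \<xi>"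
      using MVT2[OF t, of z zd] zder delta_pos by force
    have "K \<le> zd \<xi>" using zd_lin \<xi> unfolding K_def by simp
    hence P: "(t-\<delta>)*K \<le> (t-\<delta>) * zd \<xi>" using t by (intro mult_left_mono) auto
    have "K*(t-\<delta>) = (t-\<delta>)*K" by simp
    thus "z \<delta> + K*(t-\<delta>) \<le> z t" using P \<xi>(3) by linarith
  qed
  have z_top: "filterlim z at_top at_top"
    unfolding filterlim_at_top
  proof
    fix Z :: real
    show "eventually (\<lambda>t. Z \<le> z t) at_top"
      unfolding eventually_at_top_linorder
    proof (intro exI[of _ "max (\<delta>+1) (\<delta> + (Z - z \<delta>)/K)"] allI impI)
      fix t assume t: "max (\<delta>+1) (\<delta> + (Z - z \<delta>)/K) \<le> t"
      have "(Z - z \<delta>)/K \<le> t - \<delta>" using t by simp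
      hence "Z - z \<delta> \<le> K*(t-\<delta>)" using K_pos by (simp add: pos_divide_le_eq mult.commute)
      thus "Z \<le> z t" using z_lin[of t] t by simp
    qed
  qed

  have z_sup: "superexp_growth z"
    unfolding superexp_growth_def
  proof (intro conjI allI impI)
    show "continuous_on {0<..} z" by (rule continuous_on_subset[OF z_cont]) (use delta_pos in auto)
    show "\<And>x. x > 0 \<Longrightarrow> z x > 0" using z_pos delta_pos by auto
    show "filterlim z at_top at_top" by (rule z_top)
    fix \<epsilon> :: real assume \<epsilon>: "\<epsilon> > 0"
    show "((\<lambda>x. z (x - \<epsilon>) / z x) \<longlongrightarrow> 0) at_top"
      unfolding tendsto_iff
    proof (intro allI impI)
      fix e :: real assume e: "e > 0"
      define a where "a = min \<epsilon> \<delta> / 2"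
      have a: "a > 0" "a \<le> \<delta>" "2*a \<le> \<epsilon>" using \<epsilon> delta_pos unfolding a_def by auto
      define M where "M = 2/(C*a^2*e)"
      have M: "M > 0" unfolding M_def using C_pos a e by simp
      have CM: "C*a^2*M = 2/e" unfolding M_def using C_pos a e by simp
      obtain XM where XM: "XM > 0" "\<forall>x\<ge>XM. M*x \<le> f x" using superM[of M] by auto
      have "eventually (\<lambda>t. XM \<le> z t) at_top" using z_top unfolding filterlim_at_top by blast
      then obtain T1 where T1: "\<forall>t\<ge>T1. XM \<le> z t" by (auto simp: eventually_at_top_linorder)
      define T0 where "T0 = max T1 0"
      show "eventually (\<lambda>x. dist (z (x - \<epsilon>) / z x) 0 < e) at_top"
        unfolding eventually_at_top_linorder
      proof (intro exI[of _ "T0 + \<epsilon> + 1"] allI impI)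
        fix t assume t: "T0 + \<epsilon> + 1 \<le> t"
        have t1: "T0 \<le> t - 2*a" "0 \<le> t - \<epsilon>" "t - \<epsilon> \<le> t - 2*a" "0 < t - a"
          using t a unfolding T0_def by auto
        have "t \<ge> -\<delta>" "t - \<epsilon> \<ge> -\<delta>" using t1 a delta_pos by linarith+
        hence pos: "z t > 0" "z (t-\<epsilon>) > 0" using z_pos by auto
        have "t - a < t" using a by simp
        then obtain \<xi> where \<xi>: "t - a < \<xi>" "\<xi> < t" "z t - z (t-a) = (t-(t-a)) * zd \<xi>"
          using MVT2[of "t-a" t z zd] zder t1 by force
        have "C*((M*z(t-2*a))*a) \<le> zd \<xi>"
        proof (rule zd_lb)
          fix s assume s: "s \<in> {\<xi>-a..\<xi>}"
          hence s1: "t - 2*a \<le> s" "T1 \<le> s" "0 \<le> t - 2*a" using \<xi> t1 unfolding T0_def by auto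
          have "z (t-2*a) \<le> z s" using s1 by (intro z_mono) auto
          hence "M*z(t-2*a) \<le> M*z s" using M by simp
          also have "\<dots> \<le> f (z s)" using XM T1 s1 by auto
          finally show "M*z(t-2*a) \<le> g s" by (simp add: g_def)
        qed (use a t1 \<xi> in auto)
        hence "a*(C*((M*z(t-2*a))*a)) \<le> a * zd \<xi>" using a by (intro mult_left_mono) auto
        moreover have "a*(C*((M*z(t-2*a))*a)) = (C*a^2*M)*z(t-2*a)" by (simp add: power2_eq_square)
        moreover have "z (t-a) > 0" using z_pos t1 delta_pos by auto
        ultimately have "(2/e)*z(t-2*a) \<le> z t" using \<xi>(3) CM by simp
        moreover have "z (t-\<epsilon>) \<le> z (t-2*a)" using t1 by (intro z_mono) auto
        ultimately have "(2/e)*z(t-\<epsilon>) \<le> z t" using e by (smt (verit) divide_pos_pos mult_left_mono)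
        hence "2*z(t-\<epsilon>) \<le> e * z t" using e by (simp add: field_simps)
        moreover have "z t > 0" "z (t-\<epsilon>) > 0" using pos by auto
        ultimately have "z (t-\<epsilon>)/z t < e" using e by (simp add: divide_less_eq)
        thus "dist (z (t - \<epsilon>) / z t) 0 < e" using \<open>z t > 0\<close> \<open>z (t-\<epsilon>) > 0\<close> by simp
      qed
    qed
  qed
  have fratio: "((\<lambda>x. f (z (x-\<delta>)) / f (z x)) \<longlongrightarrow> 0) at_top"
    using f_pres z_sup delta_pos unfolding preserves_superexp_def by blast

  obtain m1 where m1: "m1 > 0" "\<forall>x\<ge>1/2. m1 \<le> f x" using f_lb[OF f_cont f_pos X, of "1/2"] by auto
  define I0 where "I0 = integral {0..1} f"
  have fcont: "\<And>a b. 0 < a \<Longrightarrow> continuous_on {a..b} f"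
    by (rule continuous_on_subset[OF f_cont]) auto
  have fint: "\<And>a b. 0 < a \<Longrightarrow> f integrable_on {a..b}"
    by (rule integrable_continuous_interval, rule fcont)
  have I0_pos: "I0 > 0"
  proof -
    define f0 where "f0 = (\<lambda>x. if x = 0 then 0 else f x)"
    have e1: "integral {0..1} f0 = I0" unfolding I0_def
      by (rule integral_spike[of "{0}"]) (auto simp: f0_def)
    have i1: "f0 integrable_on {0..1}"
      by (rule integrable_spike_finite[where S="{0}" and f=f]) (use f_int in \<open>auto simp: f0_def\<close>)
    have i2: "f0 integrable_on {1/2..1}"
      by (rule integrable_on_subinterval[OF i1]) auto
    have "m1*(1-1/2) \<le> integral {1/2..1} f0"
      by (rule int_lb[OF i2]) (use m1 in \<open>auto simp: f0_def\<close>)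
    also have "\<dots> \<le> integral {0..1} f0"
      by (rule integral_subset_le[OF _ i2 i1]) (use f_pos in \<open>auto simp: f0_def less_imp_le\<close>)
    finally show ?thesis using e1 m1 by simp
  qed
  define \<Phi>1 where "\<Phi>1 = (\<lambda>u. I0 + integral {1..u} f)"
  have \<Phi>eq: "\<And>u. 1 \<le> u \<Longrightarrow> integral {0..u} f = \<Phi>1 u"
  proof -
    fix u :: real assume u: "1 \<le> u"
    have "f integrable_on {0..u}" by (rule Henstock_Kurzweil_Integration.integrable_combine[where a=0 and c=1 and b=u, OF _ u f_int fint]) auto
    thus "integral {0..u} f = \<Phi>1 u" unfolding \<Phi>1_def I0_def
      using Henstock_Kurzweil_Integration.integral_combine[of 0 1 u f] u by simp
  qed
  have \<Phi>_lb: "\<And>u. 1 \<le> u \<Longrightarrow> I0 + m1*(u-1) \<le> \<Phi>1 u"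
  proof -
    fix u :: real assume u: "1 \<le> u"
    have "m1*(u-1) \<le> integral {1..u} f" by (rule int_lb[OF fint]) (use u m1 in auto)
    thus "I0 + m1*(u-1) \<le> \<Phi>1 u" unfolding \<Phi>1_def by simp
  qed
  have \<Phi>pos: "\<And>u. 1 \<le> u \<Longrightarrow> \<Phi>1 u > 0"
    using \<Phi>_lb I0_pos m1 by (smt (verit) mult_nonneg_nonneg)
  have \<Phi>der: "\<And>u. 1 < u \<Longrightarrow> (\<Phi>1 has_real_derivative f u) (at u)"
  proof -
    fix u :: real assume u: "1 < u"
    have "((\<lambda>u. integral {1..u} f) has_real_derivative f u) (at u)"
      by (rule int_deriv) (use fcont u in auto)
    from DERIV_add[OF DERIV_const this] show "(\<Phi>1 has_real_derivative f u) (at u)"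
      unfolding \<Phi>1_def by simp
  qed
  have \<Phi>top: "filterlim \<Phi>1 at_top at_top"
    unfolding filterlim_at_top
  proof
    fix Z :: real
    show "eventually (\<lambda>u. Z \<le> \<Phi>1 u) at_top"
      unfolding eventually_at_top_linorder
    proof (intro exI[of _ "max 1 (1 + (Z - I0)/m1)"] allI impI)
      fix u assume u: "max 1 (1 + (Z - I0)/m1) \<le> u"
      have "(Z - I0)/m1 \<le> u - 1" using u by simp
      hence "Z - I0 \<le> m1*(u-1)" using m1 by (simp add: pos_divide_le_eq mult.commute)
      thus "Z \<le> \<Phi>1 u" using \<Phi>_lb[of u] u by simp
    qed
  qed
  have z_ev: "eventually (\<lambda>t. 2 \<le> z t) at_top" using z_top unfolding filterlim_at_top by blast
  define P where "P = (\<lambda>y. integral {-\<delta>..y} g)"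
  have zd_eq: "\<And>t. 0 \<le> t \<Longrightarrow> zd t = C*(P t - P (t-\<delta>))"
  proof -
    fix t :: real assume t: "0 \<le> t"
    have "integral {-\<delta>..t-\<delta>} g + integral {t-\<delta>..t} g = integral {-\<delta>..t} g"
      by (rule Henstock_Kurzweil_Integration.integral_combine) (use t delta_pos g_int in auto)
    thus "zd t = C*(P t - P (t-\<delta>))" unfolding zd_def P_def by (metis add_diff_cancel_left' right_diff_distrib)
  qed
  have Pder: "\<And>y. -\<delta> < y \<Longrightarrow> (P has_real_derivative g y) (at y)"
    unfolding P_def by (rule int_deriv) (use continuous_on_subset[OF g_cont] in auto)
  have zd2der: "\<And>t. 0 < t \<Longrightarrow> ((\<lambda>t. C*(P t - P (t-\<delta>))) has_real_derivative C*(g t - g (t-\<delta>))) (at t)"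
  proof -
    fix t :: real assume t: "0 < t"
    have d1: "(P has_real_derivative g t) (at t)" using Pder t delta_pos by simp
    have d2: "((\<lambda>t. P (t - \<delta>)) has_real_derivative g (t-\<delta>)) (at t)"
      using DERIV_shift[of P "g (t-\<delta>)" t "-\<delta>"] Pder[of "t-\<delta>"] t by simp
    from DERIV_cmult[OF DERIV_diff[OF d1 d2], of C]
    show "((\<lambda>t. C*(P t - P (t-\<delta>))) has_real_derivative C*(g t - g (t-\<delta>))) (at t)" by simp
  qed

  have ev_big: "eventually (\<lambda>t. \<delta> \<le> t \<and> 2 \<le> z t) at_top"
    using z_ev eventually_ge_at_top[of \<delta>] by eventually_elim auto
  have q_lim: "((\<lambda>t. (C*(P t - P (t-\<delta>)))^2 / (2*C*\<Phi>1 (z t))) \<longlongrightarrow> 1) at_top"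
  proof (rule lhospital_at_top_at_top[where f="\<lambda>t. (C*(P t - P (t-\<delta>)))^2"
        and f'="\<lambda>t. of_nat 2 * (C*(g t - g (t-\<delta>)) * (C*(P t - P (t-\<delta>)))^(2 - Suc 0))"
        and g="\<lambda>t. 2*C*\<Phi>1 (z t)" and g'="\<lambda>t. 2*C*(f (z t) * zd t)"])
    show "LIM x at_top. 2*C*\<Phi>1 (z x) :> at_top"
      by (rule filterlim_tendsto_pos_mult_at_top[OF tendsto_const _ filterlim_compose[OF \<Phi>top z_top]])
         (use C_pos in simp)
    show "eventually (\<lambda>x. 2*C*(f (z x) * zd x) \<noteq> 0) at_top"
      using ev_big
    proof eventually_elim
      case (elim x)
      have "f (z x) > 0" using f_pos elim by simp
      thus ?case using zd_pos[of x] elim C_pos by simp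
    qed
    show "eventually (\<lambda>x. DERIV (\<lambda>t. (C*(P t - P (t-\<delta>)))^2) x :>
       of_nat 2 * (C*(g x - g (x-\<delta>)) * (C*(P x - P (x-\<delta>)))^(2 - Suc 0))) at_top"
      using ev_big
    proof eventually_elim
      case (elim x)
      show ?case by (rule DERIV_power[OF zd2der]) (use elim delta_pos in simp)
    qed
    show "eventually (\<lambda>x. DERIV (\<lambda>t. 2*C*\<Phi>1 (z t)) x :> 2*C*(f (z x) * zd x)) at_top"
      using ev_big
    proof eventually_elim
      case (elim x)
      have "((\<lambda>t. \<Phi>1 (z t)) has_real_derivative f (z x) * zd x) (at x)"
        by (rule DERIV_chain2[OF \<Phi>der zder]) (use elim delta_pos in simp)+
      thus ?case by (rule DERIV_cmult)
    qed
    have "((\<lambda>x. 1 - f (z (x-\<delta>)) / f (z x)) \<longlongrightarrow> 1 - 0) at_top"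
      by (intro tendsto_diff tendsto_const fratio)
    moreover have "eventually (\<lambda>x. 1 - f (z (x-\<delta>)) / f (z x) =
       of_nat 2 * (C*(g x - g (x-\<delta>)) * (C*(P x - P (x-\<delta>)))^(2 - Suc 0)) / (2*C*(f (z x) * zd x))) at_top"
      using ev_big
    proof eventually_elim
      case (elim x)
      have fz: "f (z x) > 0" using f_pos elim by simp
      have zx: "zd x > 0" using zd_pos elim by simp
      have "C*(P x - P (x-\<delta>)) = zd x" using zd_eq[of x] elim delta_pos by simp
      thus ?case using fz zx C_pos by (simp add: g_def field_simps)
    qed
    ultimately show "((\<lambda>x. of_nat 2 * (C*(g x - g (x-\<delta>)) * (C*(P x - P (x-\<delta>)))^(2 - Suc 0))
        / (2*C*(f (z x) * zd x))) \<longlongrightarrow> 1) at_top"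
      by (simp add: tendsto_cong)
  qed
  have q2: "((\<lambda>t. zd t / sqrt (\<Phi>1 (z t))) \<longlongrightarrow> sqrt (2*C)) at_top"
  proof -
    have "((\<lambda>t. sqrt (2*C) * sqrt ((C*(P t - P (t-\<delta>)))^2 / (2*C*\<Phi>1 (z t)))) \<longlongrightarrow> sqrt (2*C) * sqrt 1) at_top"
      by (intro tendsto_intros q_lim)
    moreover have "eventually (\<lambda>t. sqrt (2*C) * sqrt ((C*(P t - P (t-\<delta>)))^2 / (2*C*\<Phi>1 (z t)))
        = zd t / sqrt (\<Phi>1 (z t))) at_top"
      using ev_big
    proof eventually_elim
      case (elim x)
      have zx: "zd x > 0" using zd_pos elim by simp
      have ph: "\<Phi>1 (z x) > 0" using \<Phi>pos elim by simp
      have "C*(P x - P (x-\<delta>)) = zd x" using zd_eq[of x] elim delta_pos by simp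
      thus ?case using zx ph C_pos
        by (simp add: real_sqrt_divide real_sqrt_mult field_simps)
    qed
    ultimately show ?thesis by (simp add: tendsto_cong)
  qed
  define h where "h = (\<lambda>u. 1 / sqrt (\<Phi>1 u))"
  have hcont: "\<And>b. continuous_on {1..b} h"
  proof -
    fix b :: real
    have "continuous_on {1..b} (\<lambda>u. integral {1..u} f)"
      by (rule indefinite_integral_continuous_1[OF fint]) simp
    hence "continuous_on {1..b} \<Phi>1" unfolding \<Phi>1_def by (intro continuous_intros)
    thus "continuous_on {1..b} h" unfolding h_def
      by (intro continuous_intros) (auto dest!: \<Phi>pos)
  qed
  have Flim: "((\<lambda>t. integral {1..z t} h / t) \<longlongrightarrow> sqrt (2*C)) at_top"
  proof (rule lhospital_at_top_at_top[where f="\<lambda>t. integral {1..z t} h"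
        and f'="\<lambda>t. h (z t) * zd t" and g="\<lambda>t. t" and g'="\<lambda>t. 1"])
    show "LIM x at_top. x :> at_top" by (rule filterlim_ident)
    show "eventually (\<lambda>x. (1::real) \<noteq> 0) at_top" by simp
    show "eventually (\<lambda>x. DERIV (\<lambda>t. integral {1..z t} h) x :> h (z x) * zd x) at_top"
      using ev_big
    proof eventually_elim
      case (elim x)
      show ?case
        by (rule DERIV_chain2[OF int_deriv[OF hcont] zder]) (use elim delta_pos in simp)+
    qed
    show "eventually (\<lambda>x. DERIV (\<lambda>t. t) x :> 1) at_top" by (simp add: DERIV_ident)
    show "((\<lambda>x. h (z x) * zd x / 1) \<longlongrightarrow> sqrt (2*C)) at_top"
      using q2 by (simp add: h_def)
  qed
  have "eventually (\<lambda>t. integral {1..z t} h / t = F_U f (z t) / t) at_top"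
    using ev_big
  proof eventually_elim
    case (elim x)
    have "integral {1..z x} (\<lambda>u. 1 / sqrt (integral {0..u} f)) = integral {1..z x} h"
      by (rule Henstock_Kurzweil_Integration.integral_cong) (simp add: h_def \<Phi>eq)
    thus ?case using elim by (simp add: F_U_def Let_def)
  qed
  with Flim show ?thesis by (simp add: tendsto_cong)
qed
end
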